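(* Let $V$ be one of the three $2$-dimensional commutative unital algebras over $\mathbb F_2$ with basis $e,x$, where $e$ is the unit and (A) $x\circ x=0$; (B) $x\circ x=x$; (C) $x\circ x=e+x$. Consider the associated differential calculus on $A=\mathbb F_2[e,x]$. Then for every quantum metric $g$ on this calculus and every quantum Levi-Civita connection $\nabla$ for $g$ with constant coefficients, the curvature $R_\nabla$ vanishes.
   Context: Standing setup. Work over $\mathbb F_2$. Let $(V,\circ)$ be a commutative associative algebra over $\mathbb F_2$ with basis $x^1,\dots,x^n$ and structure constants $x^\mu\circ x^\nu=\sum_\rho V^{\mu\nu}{}_\rho x^\rho$. Let $A=\mathbb F_2[x^1,\dots,x^n]$ be the polynomial algebra on the same symbols. The associated differential calculus is the $A$-bimodule $\Omega^1$ which is free as a left $A$-module on $\mathrm dx^1,\dots,\mathrm dx^n$, with right action determined by $\mathrm dx^\mu\, x^\nu=x^\nu\,\mathrm dx^\mu+\sum_\rho V^{\mu\nu}{}_\rho\,\mathrm dx^\rho$, together with the unique map $\mathrm d:A\to\Omega^1$ satisfying the Leibniz rule $\mathrm d(ab)=(\mathrm da)b+a\,\mathrm db$, $\mathrm d(x^\mu)=\mathrm dx^\mu$, $\mathrm d1=0$. The bimodule $\Omega^1\otimes_A\Omega^1$ is free as a left module on $\mathrm dx^\mu\otimes\mathrm dx^\nu$. $\Omega^2$ is the quotient of $\Omega^1\otimes_A\Omega^1$ by the sub-bimodule generated by $\mathrm dx^\mu\otimes\mathrm dx^\mu$ and $\mathrm dx^\mu\otimes\mathrm dx^\nu+\mathrm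 dx^\nu\otimes \mathrm dx^\mu$; the quotient map is denoted $\wedge$, and $\mathrm d$ is extended to $\Omega^1$ by $\mathrm d(a\,\mathrm dx^\mu)=\mathrm da\wedge\mathrm dx^\mu$. A quantum metric is $g=\sum_{\mu,\nu}g_{\mu\nu}\mathrm dx^\mu\otimes\mathrm dx^\nu$ with constants $g_{\mu\nu}\in\mathbb F_2$, $g_{\mu\nu}=g_{\nu\mu}$, the matrix $(g_{\mu\nu})$ invertible, and $g$ central: $x^\rho g=g x^\rho$ for all $\rho$. A bimodule connection is a pair $(\nabla,\sigma)$ with $\nabla:\Omega^1\to\Omega^1\otimes_A\Omega^1$ additive, $\nabla(a\omega)=a\nabla\omega+\mathrm da\otimes\omega$, and $\sigma:\Omega^1\otimes_A\Omega^1\to\Omega^1\otimes_A\Omega^1$ a bimodule map with $\nabla(\omega a)=(\nabla\omega)a+\sigma(\omega\otimes\mathrm da)$. It has constant coefficients if $\nabla\mathrm dx^\mu=\sum\Gamma^\mu{}_{\nu\rho}\mathrm dx^\nu\otimes\mathrm dx^\rho$ with $\Gamma^\mu{}_{\nu\rho}\in\mathbb F_2$. A quantum Levi-Civita connection (QLC) for $g$ is a bimodule connection with $\sigma$ invertible, torsion free ($\wedge\nabla=\mathrm d$ on $\Omega^1$) and metric compatible ($(\nabla\otimes\mathrm{id})g+(\sigma\otimes\mathrm{id})(\mathrm{id}\otimes\nabla)g=0$). Its curvature is $R_\nabla=(\mathrm d\otimes\mathrm{id}-(\wedge\otimes\mathrm{id})(\mathrm{id}\otimes\nabla))\nabla:\Omega^1\to\Omega^2\otimes_A\Omega^1$.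 Here the basis is $x^1=e$, $x^2=x$. *)

theory Defs
  imports "HOL-Library.Z2" "HOL-Computational_Algebra.Polynomial"
begin

text \<open>The ground field F_2 is the type bit. The two basis symbols are x^1 = e, x^2 = x.\<close>

datatype gen = E | X

text \<open>A = F_2[e,x], realised as bivariate polynomials (outer variable x,
  inner variable e).\<close>
type_synonym alg = "bit poly poly"

text \<open>Omega^1: left coefficients w.r.t. the left basis de, dx.
  Omega^1 (x)_A Omega^1: left coefficients w.r.t. dx^a (x) dx^b.
  Omega^2 is free of rank one on the class of de (x) dx; an element is its coefficient.
  Omega^2 (x)_A Omega^1: left coefficients w.r.t. (de/\dx) (x) dx^b.\<close>
type_synonym om1 = "gen \<Rightarrow> alg"
type_synonym om11 = "gen \<Rightarrow> gen \<Rightarrow> alg"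
type_synonym om2 = alg
type_synonym om21 = "gen \<Rightarrow> alg"

definition var :: "gen \<Rightarrow> alg" where
  "var m = (case m of E \<Rightarrow> [:[:0, 1:]:] | X \<Rightarrow> [:0, 1:])"

definition cst :: "bit \<Rightarrow> alg" where
  "cst c = [:[:c:]:]"

definition gsum :: "(gen \<Rightarrow> 'a::comm_monoid_add) \<Rightarrow> 'a" where
  "gsum f = f E + f X"

text \<open>The three algebras V: e is the unit, and x o x = 0 / x / e + x.
  vstr c m n r is the structure constant V^{mn}_r.\<close>
datatype alg_case = CaseA | CaseB | CaseC

definition vstr :: "alg_case \<Rightarrow> gen \<Rightarrow> gen \<Rightarrow> gen \<Rightarrow> bit" where
  "vstr c m n r =
     (if m = E then (if r = n then 1 else 0)
      else if n = E then (if r = m then 1 else 0)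
      else (case c of
              CaseA \<Rightarrow> 0
            | CaseB \<Rightarrow> (if r = X then 1 else 0)
            | CaseC \<Rightarrow> 1))"

definition dbasis :: "gen \<Rightarrow> om1" where
  "dbasis m = (\<lambda>n. if n = m then 1 else 0)"

text \<open>Right action of A on Omega^1: the (unique) map making Omega^1 an A-bimodule
  with dx^m x^n = x^n dx^m + sum_r V^{mn}_r dx^r.\<close>
definition is_right_action :: "(gen \<Rightarrow> gen \<Rightarrow> gen \<Rightarrow> bit) \<Rightarrow> (om1 \<Rightarrow> alg \<Rightarrow> om1) \<Rightarrow> bool" where
  "is_right_action V r \<longleftrightarrow>
     (\<forall>w u a. r (\<lambda>n. w n + u n) a = (\<lambda>n. r w a n + r u a n)) \<and>
     (\<forall>w a b. r w (a + b) = (\<lambda>n. r w a n + r w b n)) \<and>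
     (\<forall>w a b. r (\<lambda>n. b * w n) a = (\<lambda>n. b * r w a n)) \<and>
     (\<forall>w a b. r w (a * b) = r (r w a) b) \<and>
     (\<forall>w. r w 1 = w) \<and>
     (\<forall>m n. r (dbasis m) (var n) = (\<lambda>p. var n * dbasis m p + cst (V m n p)))"

text \<open>Tensor product over A of two 1-forms, in the left basis dx^a (x) dx^b.\<close>
definition tens :: "(om1 \<Rightarrow> alg \<Rightarrow> om1) \<Rightarrow> om1 \<Rightarrow> om1 \<Rightarrow> om11" where
  "tens r w u = (\<lambda>a b. gsum (\<lambda>m. w m * r (dbasis m) (u b) a))"

definition ract2 :: "(om1 \<Rightarrow> alg \<Rightarrow> om1) \<Rightarrow> om11 \<Rightarrow> alg \<Rightarrow> om11" where
  "ract2 r T f = (\<lambda>a b. gsum (\<lambda>m. gsum (\<lambda>n. T m n * tens r (dbasis m) (r (dbasis n) f) a b)))"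

text \<open>The quotient map /\ : Omega^1 (x)_A Omega^1 -> Omega^2, whose kernel is the sub-bimodule
  generated by dx^m (x) dx^m and dx^m (x) dx^n + dx^n (x) dx^m; its value is the
  coefficient of de /\ dx (note dx /\ de = de /\ dx in characteristic 2).\<close>
definition wedge :: "om11 \<Rightarrow> om2" where
  "wedge T = T E X + T X E"

definition is_dd :: "(om1 \<Rightarrow> alg \<Rightarrow> om1) \<Rightarrow> (alg \<Rightarrow> om1) \<Rightarrow> bool" where
  "is_dd r d \<longleftrightarrow>
     (\<forall>a b. d (a + b) = (\<lambda>n. d a n + d b n)) \<and>
     (\<forall>a b. d (a * b) = (\<lambda>n. r (d a) b n + a * d b n)) \<and>
     (\<forall>m. d (var m) = dbasis m) \<and>
     d 1 = (\<lambda>n. 0)"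

definition d1 :: "(om1 \<Rightarrow> alg \<Rightarrow> om1) \<Rightarrow> (alg \<Rightarrow> om1) \<Rightarrow> om1 \<Rightarrow> om2" where
  "d1 r d w = gsum (\<lambda>m. wedge (tens r (d (w m)) (dbasis m)))"

definition gtens :: "(gen \<Rightarrow> gen \<Rightarrow> bit) \<Rightarrow> om11" where
  "gtens g = (\<lambda>a b. cst (g a b))"

definition quantum_metric :: "(om1 \<Rightarrow> alg \<Rightarrow> om1) \<Rightarrow> (gen \<Rightarrow> gen \<Rightarrow> bit) \<Rightarrow> bool" where
  "quantum_metric r g \<longleftrightarrow>
     (\<forall>m n. g m n = g n m) \<and>
     g E E * g X X - g E X * g X E \<noteq> 0 \<and>
     (\<forall>p. (\<lambda>a b. var p * gtens g a b) = ract2 r (gtens g) (var p))"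

definition bimodule_connection ::
  "(om1 \<Rightarrow> alg \<Rightarrow> om1) \<Rightarrow> (alg \<Rightarrow> om1) \<Rightarrow> (om1 \<Rightarrow> om11) \<Rightarrow> (om11 \<Rightarrow> om11) \<Rightarrow> bool" where
  "bimodule_connection r d nabla sigma \<longleftrightarrow>
     (\<forall>w u. nabla (\<lambda>n. w n + u n) = (\<lambda>a b. nabla w a b + nabla u a b)) \<and>
     (\<forall>f w. nabla (\<lambda>n. f * w n) = (\<lambda>a b. f * nabla w a b + tens r (d f) w a b)) \<and>
     (\<forall>S T. sigma (\<lambda>a b. S a b + T a b) = (\<lambda>a b. sigma S a b + sigma T a b)) \<and>
     (\<forall>f T. sigma (\<lambda>a b. f * T a b) = (\<lambda>a b. f * sigma T a b)) \<and>
     (\<forall>f T. sigma (ract2 r T f) = ract2 r (sigma T) f) \<and>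
     (\<forall>w f. nabla (r w f) = (\<lambda>a b. ract2 r (nabla w) f a b + sigma (tens r w (d f)) a b))"

definition constant_coefficients :: "(om1 \<Rightarrow> om11) \<Rightarrow> bool" where
  "constant_coefficients nabla \<longleftrightarrow>
     (\<exists>Gam :: gen \<Rightarrow> gen \<Rightarrow> gen \<Rightarrow> bit. \<forall>m. nabla (dbasis m) = (\<lambda>a b. cst (Gam m a b)))"

definition torsion_free :: "(om1 \<Rightarrow> alg \<Rightarrow> om1) \<Rightarrow> (alg \<Rightarrow> om1) \<Rightarrow> (om1 \<Rightarrow> om11) \<Rightarrow> bool" where
  "torsion_free r d nabla \<longleftrightarrow> (\<forall>w. wedge (nabla w) = d1 r d w)"

text \<open>Metric compatibility (nabla (x) id) g + (sigma (x) id)(id (x) nabla) g = 0 in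
  Omega^1 (x)_A Omega^1 (x)_A Omega^1, written in the left basis dx^a (x) dx^c (x) dx^b.
  With g = sum_n xi_n (x) dx^n, xi_n = sum_m g_{mn} dx^m, and
  nabla dx^n = sum_b eta_{nb} (x) dx^b, the left-hand side is
  sum_n nabla(xi_n) (x) dx^n + sum_{n,b} sigma(xi_n (x) eta_{nb}) (x) dx^b.\<close>
definition metric_compatible ::
  "(om1 \<Rightarrow> alg \<Rightarrow> om1) \<Rightarrow> (gen \<Rightarrow> gen \<Rightarrow> bit) \<Rightarrow> (om1 \<Rightarrow> om11) \<Rightarrow> (om11 \<Rightarrow> om11) \<Rightarrow> bool" where
  "metric_compatible r g nabla sigma \<longleftrightarrow>
     (\<forall>a c b.
        nabla (\<lambda>m. cst (g m b)) a c
        + gsum (\<lambda>n. sigma (tens r (\<lambda>m. cst (g m n)) (\<lambda>p. nabla (dbasis n) p b)) a c) = 0)"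

definition QLC ::
  "(om1 \<Rightarrow> alg \<Rightarrow> om1) \<Rightarrow> (alg \<Rightarrow> om1) \<Rightarrow> (gen \<Rightarrow> gen \<Rightarrow> bit) \<Rightarrow> (om1 \<Rightarrow> om11) \<Rightarrow> (om11 \<Rightarrow> om11) \<Rightarrow> bool" where
  "QLC r d g nabla sigma \<longleftrightarrow>
     bimodule_connection r d nabla sigma \<and> bij sigma \<and>
     torsion_free r d nabla \<and> metric_compatible r g nabla sigma"

text \<open>Curvature R = (d (x) id - (/\ (x) id)(id (x) nabla)) nabla. Writing
  nabla w = sum_n zeta_n (x) dx^n with zeta_n = sum_m (nabla w)_{mn} dx^m, and
  nabla dx^n = sum_b eta_{nb} (x) dx^b, one gets
  R w = sum_b (d zeta_b - sum_n zeta_n /\ eta_{nb}) (x) dx^b;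
  the result is given by its left coefficients w.r.t. (de /\ dx) (x) dx^b.\<close>
definition curvature :: "(om1 \<Rightarrow> alg \<Rightarrow> om1) \<Rightarrow> (alg \<Rightarrow> om1) \<Rightarrow> (om1 \<Rightarrow> om11) \<Rightarrow> om1 \<Rightarrow> om21" where
  "curvature r d nabla w =
     (\<lambda>b. d1 r d (\<lambda>m. nabla w m b)
          - gsum (\<lambda>n. wedge (tens r (\<lambda>m. nabla w m n) (\<lambda>p. nabla (dbasis n) p b))))"

end

theory Submission
  imports Defs
begin
declare add_bit_eq_xor[simp del] mult_bit_eq_and[simp del]

lemma two_alg[simp]: "(2::alg) = 0"
proof -
  have "(2::bit poly) = 0" by (metis bit_2_eq_0 of_nat_numeral of_nat_poly pCons_0_0)
  then show ?thesis by (metis of_nat_numeral of_nat_poly pCons_0_0)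
qed
lemma char2[simp]: "(p::alg) + p = 0"
  by (metis mult_2 mult_zero_left two_alg)
lemma char2'[simp]: "(p::alg) + (p + q) = q"
  by (simp add: add.assoc[symmetric])
lemma uminus_alg[simp]: "- (q::alg) = q"
  using char2[of q] by (simp add: neg_eq_iff_add_eq_0)
lemma minus_alg[simp]: "(p::alg) - q = p + q"
  by (simp only: diff_conv_add_uminus uminus_alg)
lemma bitchar2[simp]: "(p::bit) + p = 0"
  by (cases p) auto

lemma cst0[simp]: "cst 0 = 0" by (simp add: cst_def)
lemma cst1[simp]: "cst 1 = 1" by (simp only: cst_def pCons_one)
lemma cst_add: "cst (a + b) = cst a + cst b" by (simp add: cst_def)
lemma cst_mult: "cst (a * b) = cst a * cst b" by (simp add: cst_def)

lemma alg_induct: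
  assumes c: "\<And>c. P (cst c)" and v: "\<And>m. P (var m)"
    and a: "\<And>a b. P a \<Longrightarrow> P b \<Longrightarrow> P (a + b)"
    and m: "\<And>a b. P a \<Longrightarrow> P b \<Longrightarrow> P (a * b)"
  shows "P f"
proof -
  have inner: "P [:q:]" for q :: "bit poly"
  proof (induction q)
    case 0 then show ?case using c[of 0] by (simp add: cst_def)
  next
    case (pCons x q)
    have "[:pCons x q:] = cst x + var E * [:q:]"
      by (simp add: cst_def var_def)
    then show ?case using pCons c v a m by metis
  qed
  show ?thesis
  proof (induction f)
    case 0 then show ?case using c[of 0] by (simp add: cst_def)
  next
    case (pCons x q)
    have "pCons x q = [:x:] + var X * q"
      by (simp add: var_def)
    then show ?case using pCons inner v a m by metis
  qed
qed

lemma gen_all: "(\<forall>m. P m) \<longleftrightarrow> P E \<and> P X" by (metis gen.exhaust)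
lemma dbasis_cst: "dbasis m n = cst (if n = m then 1 else 0)" by (simp add: dbasis_def)

definition ev :: "alg \<Rightarrow> bit" where "ev q = poly (poly q 0) 0"
lemma ev_add[simp]: "ev (p + q) = ev p + ev q" by (simp add: ev_def)
lemma ev_mult[simp]: "ev (p * q) = ev p * ev q" by (simp add: ev_def)
lemma ev_cst[simp]: "ev (cst x) = x" by (simp add: ev_def cst_def)
lemma ev_var[simp]: "ev (var m) = 0" by (cases m) (simp_all add: ev_def var_def)
lemma ev_0[simp]: "ev 0 = 0" by (simp add: ev_def)
lemma ev_1[simp]: "ev 1 = 1" by (simp add: ev_def)

definition K :: "(gen \<Rightarrow> gen \<Rightarrow> gen \<Rightarrow> bit) \<Rightarrow> gen \<Rightarrow> gen \<Rightarrow> bit" where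
  "K G k b = gsum (\<lambda>n. G k E n * G n X b + G k X n * G n E b)"
definition RR :: "alg_case \<Rightarrow> (gen \<Rightarrow> gen \<Rightarrow> bit) \<Rightarrow> gen \<Rightarrow> gen \<Rightarrow> gen \<Rightarrow> bit" where
  "RR c t n a b = gsum (\<lambda>k. gsum (\<lambda>l. t k l * ((if l = b then vstr c k n a else 0) + (if k = a then vstr c l n b else 0))))"
definition SB :: "alg_case \<Rightarrow> (gen \<Rightarrow> gen \<Rightarrow> gen \<Rightarrow> bit) \<Rightarrow> gen \<Rightarrow> gen \<Rightarrow> gen \<Rightarrow> gen \<Rightarrow> bit" where
  "SB c G m n a b = (if n = a \<and> m = b then 1 else 0) + gsum (\<lambda>p. vstr c m n p * G p a b) + RR c (G m) n a b"
definition MC :: "alg_case \<Rightarrow> (gen \<Rightarrow> gen \<Rightarrow> bit) \<Rightarrow> (gen \<Rightarrow> gen \<Rightarrow> gen \<Rightarrow> bit) \<Rightarrow> gen \<Rightarrow> gen \<Rightarrow> gen \<Rightarrow> bit" where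
  "MC c g G a cc b = gsum (\<lambda>m. g m b * G m a cc) + gsum (\<lambda>n. gsum (\<lambda>k. gsum (\<lambda>l. g k n * G n l b * SB c G k l a cc)))"

definition basis2 :: "gen \<Rightarrow> gen \<Rightarrow> om11" where
  "basis2 m n = (\<lambda>a b. if a = m \<and> b = n then 1 else 0)"

locale L =
  fixes c :: alg_case and r :: "om1 \<Rightarrow> alg \<Rightarrow> om1" and d :: "alg \<Rightarrow> om1"
  assumes RA: "is_right_action (vstr c) r" and DD: "is_dd r d"
begin

lemma r_add1: "r (\<lambda>n. w n + u n) a = (\<lambda>n. r w a n + r u a n)" using RA unfolding is_right_action_def by blast
lemma r_add2: "r w (a + b) = (\<lambda>n. r w a n + r w b n)" using RA unfolding is_right_action_def by blast
lemma r_lin: "r (\<lambda>n. b * w n) a = (\<lambda>n. b * r w a n)" using RA unfolding is_right_action_def by blast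
lemma r_mult: "r w (a * b) = r (r w a) b" using RA unfolding is_right_action_def by blast
lemma r_one: "r w 1 = w" using RA unfolding is_right_action_def by blast
lemma r_var: "r (dbasis m) (var n) = (\<lambda>p. var n * dbasis m p + cst (vstr c m n p))" using RA unfolding is_right_action_def by blast

lemma r_zero: "r w 0 = (\<lambda>n. 0)"
proof -
  have "r w (0 + 0) = (\<lambda>n. r w 0 n + r w 0 n)" by (rule r_add2)
  then show ?thesis by (simp add: fun_eq_iff)
qed
lemma r_cst: "r w (cst x) = (\<lambda>n. cst x * w n)"
  by (cases x) (auto simp: r_zero r_one)

lemma w_decomp: "w = (\<lambda>n. w E * dbasis E n + w X * dbasis X n)"
  by (rule ext, case_tac n) (simp_all add: dbasis_def)

lemma r_decomp: "r w f = (\<lambda>n. w E * r (dbasis E) f n + w X * r (dbasis X) f n)"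
proof -
  have "r w f = r (\<lambda>n. w E * dbasis E n + w X * dbasis X n) f" by (subst w_decomp, rule refl)
  also have "\<dots> = (\<lambda>n. w E * r (dbasis E) f n + w X * r (dbasis X) f n)"
    by (simp add: r_add1 r_lin)
  finally show ?thesis .
qed

lemma d_add: "d (a + b) = (\<lambda>n. d a n + d b n)" using DD unfolding is_dd_def by blast
lemma d_mult: "d (a * b) = (\<lambda>n. r (d a) b n + a * d b n)" using DD unfolding is_dd_def by blast
lemma d_var: "d (var m) = dbasis m" using DD unfolding is_dd_def by blast
lemma d_one: "d 1 = (\<lambda>n. 0)" using DD unfolding is_dd_def by blast
lemma d_zero: "d 0 = (\<lambda>n. 0)"
proof -
  have "d (0 + 0) = (\<lambda>n. d 0 n + d 0 n)" by (rule d_add)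
  then show ?thesis by (simp add: fun_eq_iff)
qed
lemma d_cst: "d (cst x) = (\<lambda>n. 0)" by (cases x) (auto simp: d_zero d_one)
lemma d_mult_cst: "d (a * cst x) = (\<lambda>n. d a n * cst x)"
  by (simp add: d_mult d_cst r_cst mult.commute)

definition P :: "alg \<Rightarrow> alg" where "P f = r (dbasis E) f E"
definition Q :: "alg \<Rightarrow> alg" where "Q f = r (dbasis E) f X"

lemma d_inner: "d f = (\<lambda>n. r (dbasis E) f n + f * dbasis E n)"
proof (induction f rule: alg_induct)
  case (1 x) then show ?case by (cases x) (auto simp: d_zero d_one r_zero r_one fun_eq_iff dbasis_def)
next
  case (2 m) then show ?case
    apply (simp only: d_var r_var)
    by (cases m) (auto simp: fun_eq_iff dbasis_def vstr_def)
next
  case (3 a b) then show ?case by (simp add: d_add r_add2 fun_eq_iff algebra_simps)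
next
  case (4 a b)
  have "d (a * b) = (\<lambda>n. r (d a) b n + a * d b n)" by (rule d_mult)
  also have "r (d a) b = (\<lambda>n. r (r (dbasis E) a) b n + a * r (dbasis E) b n)"
    using 4 by (simp add: r_add1 r_lin)
  finally show ?case using 4 by (simp add: r_mult fun_eq_iff algebra_simps)
qed

lemma d_E: "d f E = P f + f" by (simp add: d_inner P_def dbasis_def)
lemma d_X: "d f X = Q f" by (simp add: d_inner Q_def dbasis_def)

abbreviation "aa \<equiv> cst (vstr c X X E)"
abbreviation "bb \<equiv> cst (vstr c X X X)"

lemma P_add: "P (f + g) = P f + P g" by (simp add: P_def r_add2)
lemma Q_add: "Q (f + g) = Q f + Q g" by (simp add: Q_def r_add2)
lemma P_cst: "P (cst x) = cst x" by (simp add: P_def r_cst dbasis_def)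
lemma Q_cst: "Q (cst x) = 0" by (simp add: Q_def r_cst dbasis_def)

lemma rE_mult: "r (dbasis E) (f * g) = (\<lambda>n. P f * r (dbasis E) g n + Q f * r (dbasis X) g n)"
  by (simp add: r_mult r_decomp[of "r (dbasis E) f"] P_def Q_def)
lemma rX_mult: "r (dbasis X) (f * g) = (\<lambda>n. r (dbasis X) f E * r (dbasis E) g n + r (dbasis X) f X * r (dbasis X) g n)"
  by (simp add: r_mult r_decomp[of "r (dbasis X) f"])

lemma rowX: "r (dbasis X) f = (\<lambda>n. if n = E then aa * Q f else P f + bb * Q f)"
proof (induction f rule: alg_induct)
  case (1 x) then show ?case
    apply (simp add: r_cst P_cst Q_cst fun_eq_iff dbasis_def)
    by (metis gen.exhaust)
next
  case (2 m) then show ?case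
    apply (simp only: r_var P_def Q_def)
    by (cases m) (auto simp: fun_eq_iff gen_all dbasis_def vstr_def)
next
  case (3 f g) then show ?case by (auto simp: r_add2 P_add Q_add fun_eq_iff algebra_simps)
next
  case (4 f g)
  have PM: "P (f * g) = P f * P g + Q f * (aa * Q g)"
    using 4(2) by (simp add: P_def rE_mult)
  have QM: "Q (f * g) = P f * Q g + Q f * (P g + bb * Q g)"
    using 4(2) by (simp add: Q_def rE_mult)
  show ?case
    apply (subst rX_mult)
    apply (subst 4(1))+
    apply (subst 4(2))+
    by (auto simp: fun_eq_iff gen_all PM QM algebra_simps P_def[symmetric] Q_def[symmetric])
qed

lemma P_mult: "P (f * g) = P f * P g + aa * Q f * Q g"
  by (simp add: P_def rE_mult rowX)
lemma Q_mult: "Q (f * g) = P f * Q g + Q f * P g + bb * Q f * Q g"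
  by (simp add: Q_def rE_mult rowX) (simp add: P_def Q_def algebra_simps)

lemma PQ_sym: "P (Q f) = Q (P f)"
proof (induction f rule: alg_induct)
  case (1 x) then show ?case by (simp add: P_cst Q_cst flip: cst0)
next
  case (2 m) then show ?case
  proof (cases m)
    case E
    have "Q (var E) = 0" "P (var E) = var E + 1"
      by (simp_all only: P_def Q_def r_var) (simp_all add: dbasis_def vstr_def)
    then show ?thesis using E Q_add[of "var E" 1] Q_cst[of 1] P_cst[of 0] by simp
  next
    case X
    have "Q (var X) = 1" "P (var X) = var X"
      by (simp_all only: P_def Q_def r_var) (simp_all add: dbasis_def vstr_def)
    then show ?thesis using X P_cst[of 1] by simp
  qed
next
  case (3 f g) then show ?case by (simp add: P_add Q_add)
next
  case (4 f g)
  show ?case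
    by (simp add: P_add Q_add P_mult Q_mult P_cst Q_cst 4 algebra_simps flip: cst_mult)
qed

lemma tens_dbasis0: "tens r u (dbasis m) a b = (if b = m then u a else 0)"
  apply (simp add: tens_def gsum_def dbasis_cst r_cst)
  by (cases a) (simp_all add: dbasis_def)
lemma tens_dbasis: "tens r u (dbasis m) = (\<lambda>a b. if b = m then u a else 0)"
  by (simp add: tens_dbasis0 fun_eq_iff)

lemma d1_eq: "d1 r d w = d (w X) E + d (w E) X"
  by (simp add: d1_def gsum_def wedge_def tens_dbasis)

lemma dd_zero: "d1 r d (d f) = 0"
  by (simp add: d1_eq d_E d_X Q_add PQ_sym)

lemma tens_dbasis_left: "tens r (dbasis m) u a b = r (dbasis m) (u b) a"
  by (cases m) (simp_all add: tens_def gsum_def dbasis_def)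

lemma tens_cst: "tens r u (\<lambda>p. cst (h p)) a b = u a * cst (h b)"
  apply (simp add: tens_def gsum_def r_cst)
  by (cases a) (simp_all add: dbasis_def)

lemma ev_ract2: "ev (ract2 r (\<lambda>a b. cst (t a b)) (var n) a b) = RR c t n a b"
  apply (simp add: ract2_def gsum_def tens_dbasis_left r_var dbasis_cst)
  apply (simp add: r_add2 r_mult r_cst r_var)
  by (cases n; cases a; cases b) (simp_all add: RR_def gsum_def dbasis_def algebra_simps)

end

locale L2 = L +
  fixes nabla :: "om1 \<Rightarrow> om11" and sigma :: "om11 \<Rightarrow> om11" and G :: "gen \<Rightarrow> gen \<Rightarrow> gen \<Rightarrow> bit"
  assumes BC: "bimodule_connection r d nabla sigma"
    and CC: "\<And>m. nabla (dbasis m) = (\<lambda>a b. cst (G m a b))"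
begin

lemma nab_add: "nabla (\<lambda>n. w n + u n) = (\<lambda>a b. nabla w a b + nabla u a b)" using BC unfolding bimodule_connection_def by blast
lemma nab_lin: "nabla (\<lambda>n. f * w n) = (\<lambda>a b. f * nabla w a b + tens r (d f) w a b)" using BC unfolding bimodule_connection_def by blast
lemma sig_add: "sigma (\<lambda>a b. S a b + T a b) = (\<lambda>a b. sigma S a b + sigma T a b)" using BC unfolding bimodule_connection_def by blast
lemma sig_lin: "sigma (\<lambda>a b. f * T a b) = (\<lambda>a b. f * sigma T a b)" using BC unfolding bimodule_connection_def by blast
lemma nab_r: "nabla (r w f) = (\<lambda>a b. ract2 r (nabla w) f a b + sigma (tens r w (d f)) a b)" using BC unfolding bimodule_connection_def by blast

lemma nab_decomp: "nabla w a b = w E * cst (G E a b) + w X * cst (G X a b) + d (w b) a"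
proof -
  have "nabla w = nabla (\<lambda>n. w E * dbasis E n + w X * dbasis X n)" by (subst w_decomp, rule refl)
  also have "\<dots> = (\<lambda>a b. w E * cst (G E a b) + tens r (d (w E)) (dbasis E) a b + (w X * cst (G X a b) + tens r (d (w X)) (dbasis X) a b))"
    by (simp add: nab_add nab_lin CC)
  finally show ?thesis by (cases b) (simp_all add: tens_dbasis0 algebra_simps)
qed

lemma dd0: "d (d f X) E + d (d f E) X = 0"
  using dd_zero[of f] by (simp add: d1_eq)

lemma curv_formula: "curvature r d nabla w b = w E * cst (K G E b) + w X * cst (K G X b)"
proof -
  have "curvature r d nabla w b = w E * cst (K G E b) + w X * cst (K G X b) + (d (d (w b) X) E + d (d (w b) E) X)"
    by (simp add: curvature_def d1_eq nab_decomp CC tens_cst gsum_def wedge_def d_add d_mult_cst K_def cst_add cst_mult algebra_simps)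
  then show ?thesis by (simp add: dd0)
qed


lemma tens_dbasis2: "tens r (dbasis m) (dbasis n) = basis2 m n"
  by (simp only: tens_dbasis) (simp add: basis2_def dbasis_def fun_eq_iff)

lemma sig_basis: "sigma (basis2 m n) a b = nabla (r (dbasis m) (var n)) a b + ract2 r (\<lambda>a b. cst (G m a b)) (var n) a b"
proof -
  have "nabla (r (dbasis m) (var n)) a b = ract2 r (\<lambda>a b. cst (G m a b)) (var n) a b + sigma (basis2 m n) a b"
    using fun_cong[OF fun_cong[OF nab_r[of "dbasis m" "var n"]], of a b]
    by (simp only: d_var tens_dbasis2 CC)
  then show ?thesis by simp
qed

lemma ev_sig: "ev (sigma (basis2 m n) a b) = SB c G m n a b"
  apply (simp only: sig_basis ev_add ev_ract2 nab_decomp r_var)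
  apply (simp add: d_add dbasis_cst d_mult_cst d_cst d_var)
  by (cases m; cases n; cases a; cases b) (simp_all add: SB_def gsum_def dbasis_def algebra_simps)

lemma sig_decomp: "sigma T a b = T E E * sigma (basis2 E E) a b + (T E X * sigma (basis2 E X) a b + (T X E * sigma (basis2 X E) a b + T X X * sigma (basis2 X X) a b))"
proof -
  have "T = (\<lambda>a b. T E E * basis2 E E a b + (T E X * basis2 E X a b + (T X E * basis2 X E a b + T X X * basis2 X X a b)))"
    apply (rule ext, rule ext)
    subgoal for a b by (cases a; cases b) (simp_all add: basis2_def)
    done
  then have "sigma T a b = sigma (\<lambda>a b. T E E * basis2 E E a b + (T E X * basis2 E X a b + (T X E * basis2 X E a b + T X X * basis2 X X a b))) a b"
    by simp
  also have "\<dots> = T E E * sigma (basis2 E E) a b + (T E X * sigma (basis2 E X) a b + (T X E * sigma (basis2 X E) a b + T X X * sigma (basis2 X X) a b))"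
    by (simp only: sig_add sig_lin)
  finally show ?thesis .
qed

lemma ev_sigma: "ev (sigma T a b) = gsum (\<lambda>k. gsum (\<lambda>l. ev (T k l) * SB c G k l a b))"
  apply (subst sig_decomp)
  by (simp add: ev_sig gsum_def algebra_simps)

lemma MC0:
  assumes "metric_compatible r g nabla sigma"
  shows "MC c g G a cc b = 0"
proof -
  have "nabla (\<lambda>m. cst (g m b)) a cc + gsum (\<lambda>n. sigma (tens r (\<lambda>m. cst (g m n)) (\<lambda>p. nabla (dbasis n) p b)) a cc) = 0"
    using assms unfolding metric_compatible_def by blast
  then have "ev (nabla (\<lambda>m. cst (g m b)) a cc + gsum (\<lambda>n. sigma (tens r (\<lambda>m. cst (g m n)) (\<lambda>p. nabla (dbasis n) p b)) a cc)) = 0"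
    by simp
  then show ?thesis
    by (simp add: gsum_def ev_sigma nab_decomp d_cst CC tens_cst MC_def algebra_simps)
qed

lemma CEN0:
  assumes "quantum_metric r g"
  shows "RR c g X a b = 0"
proof -
  have "(\<lambda>a b. var X * gtens g a b) = ract2 r (gtens g) (var X)"
    using assms unfolding quantum_metric_def by blast
  then have "ev (var X * gtens g a b) = ev (ract2 r (\<lambda>a b. cst (g a b)) (var X) a b)"
    unfolding gtens_def by metis
  then show ?thesis by (simp add: ev_ract2)
qed

lemma TF0:
  assumes "torsion_free r d nabla"
  shows "G m X E = G m E X"
proof -
  have "wedge (nabla (dbasis m)) = d1 r d (dbasis m)"
    using assms unfolding torsion_free_def by blast
  then have "ev (wedge (nabla (dbasis m))) = ev (d1 r d (dbasis m))" by simp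
  then have "G m E X + G m X E = 0"
    by (simp add: wedge_def CC d1_eq dbasis_cst d_cst)
  then show ?thesis by (cases "G m E X"; cases "G m X E") simp_all
qed

end

lemma bitchar2'[simp]: "(p::bit) + (p + q) = q"
  by (simp add: add.assoc[symmetric])

lemma fincheck:
  assumes sym: "g X E = g E X" and inv: "g E E * g X X - g E X * g X E \<noteq> 0"
  and tf: "\<And>m. G m X E = G m E X"
  and cen: "\<And>a b. RR c g X a b = 0"
  and mc: "\<And>a cc b. MC c g G a cc b = 0"
  shows "K G k b = 0"
proof -
  have H: "RR c g X E E = 0 \<and> RR c g X E X = 0 \<and> RR c g X X E = 0 \<and> RR c g X X X = 0 \<and>
     MC c g G E E E = 0 \<and> MC c g G E E X = 0 \<and> MC c g G E X E = 0 \<and> MC c g G E X X = 0 \<and>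
     MC c g G X E E = 0 \<and> MC c g G X E X = 0 \<and> MC c g G X X E = 0 \<and> MC c g G X X X = 0"
    using cen mc by blast
  have tfE: "G E X E = G E E X" "G X X E = G X E X" using tf by auto
  have "K G E E = 0 \<and> K G E X = 0 \<and> K G X E = 0 \<and> K G X X = 0"
    using H inv
    apply (simp only: RR_def MC_def SB_def K_def gsum_def sym tfE)
    apply (cases c; cases "g E E"; cases "g E X"; cases "g X X")
    apply (simp_all add: vstr_def)
    apply (cases "G E E E"; cases "G E E X"; cases "G E X X"; cases "G X E E"; cases "G X E X"; cases "G X X X"; simp)+
    done
  then show ?thesis by (cases k; cases b) auto
qed

theorem proposition3p1:
  fixes c :: alg_case
    and r :: "om1 \<Rightarrow> alg \<Rightarrow> om1"
    and d :: "alg \<Rightarrow> om1"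
    and g :: "gen \<Rightarrow> gen \<Rightarrow> bit"
    and nabla :: "om1 \<Rightarrow> om11"
    and sigma :: "om11 \<Rightarrow> om11"
  assumes "is_right_action (vstr c) r"
    and "is_dd r d"
    and "quantum_metric r g"
    and "QLC r d g nabla sigma"
    and "constant_coefficients nabla"
  shows "\<forall>w. curvature r d nabla w = (\<lambda>b. 0)"
proof -
  from assms(5) obtain Gam where CC: "\<forall>m. nabla (dbasis m) = (\<lambda>a b. cst (Gam m a b))"
    unfolding constant_coefficients_def by blast
  have BC: "bimodule_connection r d nabla sigma" and TF: "torsion_free r d nabla"
    and MCP: "metric_compatible r g nabla sigma"
    using assms(4) unfolding QLC_def by auto
  interpret L2 c r d nabla sigma Gam
    apply unfold_locales
    using assms(1,2) BC CC by auto
  have sym: "g X E = g E X" and inv: "g E E * g X X - g E X * g X E \<noteq> 0"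
    using assms(3) unfolding quantum_metric_def by auto
  have K0: "K Gam k b = 0" for k b
    using fincheck[OF sym inv TF0[OF TF] CEN0[OF assms(3)] MC0[OF MCP]] .
  show ?thesis by (simp add: fun_eq_iff curv_formula K0)
qed

end
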